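(* For every $Q\subset\mathrm{EX}(M)$, the space $Q(M)$ is $T_1$.
   Context: Conventions: $M$ is an $n$-dimensional smooth manifold (Hausdorff, second countable) with maximal $C^\infty$ atlas $\mathcal{A}(M)$; every chart $\alpha$ has open domain $\mathrm{dom}(\alpha)\subset M$ and open range $\mathrm{ran}(\alpha)\subset\mathbb{R}^n$. For $A\subset\mathbb{R}^n$, $\partial A$ is its boundary in $\mathbb{R}^n$; for $A\subset U\subset\mathbb{R}^n$, $\partial_U A$ is the boundary of $A$ relative to $U$. An admissible boundary point of $\alpha$ is a $p\in\partial\,\mathrm{ran}(\alpha)$ such that every sequence $(x_i)\subset\mathrm{dom}(\alpha)$ with $\alpha(x_i)\to p$ has no accumulation point in $M$; $B(\alpha)$ is the set of these. An extension is a pair $(\alpha,U)$, $U\subset\mathbb{R}^n$ open, $\mathrm{ran}(\alpha)\subset U$, $\emptyset\ne\partial_U\mathrm{ran}(\alpha)\subset B(\alpha)$; $\mathrm{EX}(M)$ is the set of extensions. A boundary set is $(\alpha,U,V)$ with $(\alpha,U)\in\mathrm{EX}(M)$, $V\subset B(\alpha)\cap U$ (a boundary point if $V=\{p\}$). $(\alpha,U,V)$ covers $(\beta,X,Y)$ if for every sequence $(y_i)\subset\mathrm{dom}(\beta)$ with $(\beta(y_i))$ having an accumulation point in $Y$ there is a subsequence $(v_i)\subset\mathrm{dom}(\alpha)$ of $(y_i)$ with $(\alpha(v_i))$ having an accumulation point in $V$; they are equivalent, $\equiv$, if each covers the other. Completion: for $Q\subset\mathrm{EX}(M)$ let $P=\{(\alpha,\mathrm{ran}(\alpha)):\alpha\in\mathcal{A}(M)\}$,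 $S_Q=P\cup Q$, $N_{(\alpha,U)}=\mathrm{ran}(\alpha)\cup\partial_U\mathrm{ran}(\alpha)$ with subspace topology of $\mathbb{R}^n$, $N_Q=\bigsqcup_{(\alpha,U)\in S_Q}N_{(\alpha,U)}$ with disjoint-union topology. Identify $x\in N_{(\alpha,U)}$ with $y\in N_{(\beta,X)}$ iff either $x\in\mathrm{ran}(\alpha)$, $y\in\mathrm{ran}(\beta)$, $\beta\circ\alpha^{-1}(x)=y$, or $x\in\partial_U\mathrm{ran}(\alpha)$, $y\in\partial_X\mathrm{ran}(\beta)$, $(\alpha,U,\{x\})\equiv(\beta,X,\{y\})$. $Q(M)$ is the quotient space with the quotient topology and $q:N_Q\to Q(M)$ the quotient map. *)

theory Defs
  imports "HOL-Analysis.Analysis"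
begin

definition has_partial :: "(real^'n \<Rightarrow> real^'m) \<Rightarrow> 'n \<Rightarrow> real^'n \<Rightarrow> real^'m \<Rightarrow> bool" where
  "has_partial f i x d \<longleftrightarrow> ((\<lambda>t. f (x + t *\<^sub>R axis i 1)) has_vector_derivative d) (at 0)"

fun Ck_on :: "nat \<Rightarrow> (real^'n) set \<Rightarrow> (real^'n \<Rightarrow> real^'m) \<Rightarrow> bool" where
  "Ck_on 0 U f = continuous_on U f"
| "Ck_on (Suc k) U f = (continuous_on U f \<and>
      (\<forall>i. \<exists>D. (\<forall>x\<in>U. has_partial f i x (D x)) \<and> Ck_on k U D))"

definition smooth_on :: "(real^'n) set \<Rightarrow> (real^'n \<Rightarrow> real^'m) \<Rightarrow> bool" where
  "smooth_on U f \<longleftrightarrow> (\<forall>k. Ck_on k U f)"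

text \<open>A chart is a pair (domain, map); the map is normalised to be undefined off its domain.\<close>
type_synonym ('a, 'n) chart = "'a set \<times> ('a \<Rightarrow> real^'n)"

definition cdom :: "('a, 'n) chart \<Rightarrow> 'a set" where "cdom c = fst c"
definition cmap :: "('a, 'n) chart \<Rightarrow> 'a \<Rightarrow> real^'n" where "cmap c = snd c"
definition cran :: "('a, 'n) chart \<Rightarrow> (real^'n) set" where "cran c = cmap c ` cdom c"

definition is_chart :: "('a::topological_space, 'n::finite) chart \<Rightarrow> bool" where
  "is_chart c \<longleftrightarrow> open (cdom c) \<and> open (cran c) \<and>
     (\<exists>g. homeomorphism (cdom c) (cran c) (cmap c) g) \<and>
     (\<forall>x. x \<notin> cdom c \<longrightarrow> cmap c x = undefined)"

definition smooth_compat :: "('a, 'n::finite) chart \<Rightarrow> ('a, 'n) chart \<Rightarrow> bool" where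
  "smooth_compat c d \<longleftrightarrow>
     smooth_on (cmap c ` (cdom c \<inter> cdom d)) (cmap d \<circ> inv_into (cdom c) (cmap c))"

definition smooth_atlas :: "('a::topological_space, 'n::finite) chart set \<Rightarrow> bool" where
  "smooth_atlas A \<longleftrightarrow> (\<forall>c\<in>A. is_chart c) \<and> (\<Union>c\<in>A. cdom c) = UNIV \<and>
     (\<forall>c\<in>A. \<forall>d\<in>A. smooth_compat c d)"

definition maximal_smooth_atlas :: "('a::topological_space, 'n::finite) chart set \<Rightarrow> bool" where
  "maximal_smooth_atlas A \<longleftrightarrow> smooth_atlas A \<and>
     (\<forall>c. is_chart c \<and> (\<forall>d\<in>A. smooth_compat c d \<and> smooth_compat d c) \<longrightarrow> c \<in> A)"

definition seq_acc :: "(nat \<Rightarrow> 'b::topological_space) \<Rightarrow> 'b \<Rightarrow> bool" where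
  "seq_acc x p \<longleftrightarrow> (\<forall>U. open U \<and> p \<in> U \<longrightarrow> infinite {i. x i \<in> U})"

definition adm_boundary :: "('a::topological_space, 'n::finite) chart \<Rightarrow> (real^'n) set" where
  "adm_boundary c = {p \<in> frontier (cran c).
     \<forall>x. (\<forall>i. x i \<in> cdom c) \<and> ((\<lambda>i. cmap c (x i)) \<longlonglongrightarrow> p) \<longrightarrow> \<not> (\<exists>y. seq_acc x y)}"

definition rel_bd :: "(real^'n) set \<Rightarrow> (real^'n) set \<Rightarrow> (real^'n) set" where
  "rel_bd U S = (top_of_set U) frontier_of S"

definition EXT :: "('a::topological_space, 'n::finite) chart set \<Rightarrow> (('a, 'n) chart \<times> (real^'n) set) set" where
  "EXT A = {(c, U). c \<in> A \<and> open U \<and> cran c \<subseteq> U \<and> rel_bd U (cran c) \<noteq> {} \<and>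
                   rel_bd U (cran c) \<subseteq> adm_boundary c}"

definition covers :: "('a::topological_space, 'n::finite) chart \<times> (real^'n) set \<times> (real^'n) set
    \<Rightarrow> ('a, 'n) chart \<times> (real^'n) set \<times> (real^'n) set \<Rightarrow> bool" where
  "covers cUV dXY \<longleftrightarrow> (case cUV of (c, U, V) \<Rightarrow> case dXY of (d, X, Y) \<Rightarrow>
     (\<forall>y. (\<forall>i. y i \<in> cdom d) \<and> (\<exists>p\<in>Y. seq_acc (\<lambda>i. cmap d (y i)) p) \<longrightarrow>
        (\<exists>r. strict_mono r \<and> (\<forall>i. y (r i) \<in> cdom c) \<and>
             (\<exists>p\<in>V. seq_acc (\<lambda>i. cmap c (y (r i))) p))))"

definition bs_equiv where
  "bs_equiv a b \<longleftrightarrow> covers a b \<and> covers b a"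

definition Ncomp :: "('a, 'n::finite) chart \<times> (real^'n) set \<Rightarrow> (real^'n) set" where
  "Ncomp e = cran (fst e) \<union> rel_bd (snd e) (cran (fst e))"

definition S_Q :: "('a::topological_space, 'n::finite) chart set \<Rightarrow> (('a, 'n) chart \<times> (real^'n) set) set
    \<Rightarrow> (('a, 'n) chart \<times> (real^'n) set) set" where
  "S_Q A Q = {(c, cran c) | c. c \<in> A} \<union> Q"

definition N_Q :: "('a::topological_space, 'n::finite) chart set \<Rightarrow> (('a, 'n) chart \<times> (real^'n) set) set
    \<Rightarrow> ((('a, 'n) chart \<times> (real^'n) set) \<times> (real^'n)) topology" where
  "N_Q A Q = sum_topology (\<lambda>e. top_of_set (Ncomp e)) (S_Q A Q)"

definition ident :: "(('a::topological_space, 'n::finite) chart \<times> (real^'n) set) \<times> (real^'n)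
    \<Rightarrow> (('a, 'n) chart \<times> (real^'n) set) \<times> (real^'n) \<Rightarrow> bool" where
  "ident a b \<longleftrightarrow> (case a of ((c, U), x) \<Rightarrow> case b of ((d, X), y) \<Rightarrow>
     (x \<in> cran c \<and> y \<in> cran d \<and> inv_into (cdom c) (cmap c) x \<in> cdom d \<and>
        cmap d (inv_into (cdom c) (cmap c) x) = y) \<or>
     (x \<in> rel_bd U (cran c) \<and> y \<in> rel_bd X (cran d) \<and>
        bs_equiv (c, U, {x}) (d, X, {y})))"

definition quotient_top :: "'a topology \<Rightarrow> ('a \<Rightarrow> 'b) \<Rightarrow> 'b topology" where
  "quotient_top X q = topology (\<lambda>U. U \<subseteq> q ` topspace X \<and> openin X {x \<in> topspace X. q x \<in> U})"

lemma istopology_quotient_top: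
  "istopology (\<lambda>U. U \<subseteq> q ` topspace X \<and> openin X {x \<in> topspace X. q x \<in> U})"
proof -
  have 1: "{x \<in> topspace X. q x \<in> S \<inter> T} = {x \<in> topspace X. q x \<in> S} \<inter> {x \<in> topspace X. q x \<in> T}" for S T
    by auto
  have 2: "{x \<in> topspace X. q x \<in> \<Union>K} = (\<Union>S\<in>K. {x \<in> topspace X. q x \<in> S})" for K
    by auto
  show ?thesis unfolding istopology_def 1 2 by blast
qed

lemma openin_quotient_top:
  "openin (quotient_top X q) U \<longleftrightarrow> U \<subseteq> q ` topspace X \<and> openin X {x \<in> topspace X. q x \<in> U}"
  by (simp add: quotient_top_def istopology_quotient_top)

definition qmap :: "('a::topological_space, 'n::finite) chart set \<Rightarrow> (('a, 'n) chart \<times> (real^'n) set) set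
    \<Rightarrow> (('a, 'n) chart \<times> (real^'n) set) \<times> (real^'n)
    \<Rightarrow> ((('a, 'n) chart \<times> (real^'n) set) \<times> (real^'n)) set" where
  "qmap A Q a = {b \<in> topspace (N_Q A Q).
     equivclp (\<lambda>u v. u \<in> topspace (N_Q A Q) \<and> v \<in> topspace (N_Q A Q) \<and> ident u v) a b}"

definition QM where
  "QM A Q = quotient_top (N_Q A Q) (qmap A Q)"

end

theory Submission
  imports Defs
begin

lemma conv_seq_acc:
  assumes "s \<longlonglongrightarrow> x" shows "seq_acc s x"
  unfolding seq_acc_def
proof (intro allI impI)
  fix U assume "open U \<and> x \<in> U"
  then have "eventually (\<lambda>n. s n \<in> U) sequentially"
    using assms topological_tendstoD by blast
  then obtain N where N: "\<And>n. n \<ge> N \<Longrightarrow> s n \<in> U" by (auto simp: eventually_sequentially)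
  have "{N..} \<subseteq> {i. s i \<in> U}" using N by auto
  moreover have "infinite {N::nat..}" by (simp add: infinite_Ici)
  ultimately show "infinite {i. s i \<in> U}" using finite_subset by blast
qed

lemma conv_seq_acc_unique:
  fixes s :: "nat \<Rightarrow> 'b::t2_space"
  assumes "s \<longlonglongrightarrow> x" "seq_acc s y" shows "x = y"
proof (rule ccontr)
  assume "x \<noteq> y"
  from hausdorff[OF this] obtain U V where UV: "open U" "open V" "x \<in> U" "y \<in> V" "U \<inter> V = {}"
    by metis
  have "eventually (\<lambda>n. s n \<in> U) sequentially"
    using assms(1) UV(1,3) by (rule topological_tendstoD)
  then obtain N where N: "\<And>n. n \<ge> N \<Longrightarrow> s n \<in> U" by (auto simp: eventually_sequentially)
  have "{i. s i \<in> V} \<subseteq> {..<N}" 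
  proof
    fix i assume "i \<in> {i. s i \<in> V}"
    then have "s i \<in> V" by simp
    then have "\<not> N \<le> i" using N UV(5) by blast
    then show "i \<in> {..<N}" by simp
  qed
  then have "finite {i. s i \<in> V}" using finite_subset by blast
  moreover have "infinite {i. s i \<in> V}" using assms(2) UV(2,4) unfolding seq_acc_def by blast
  ultimately show False by blast
qed

lemma covers_trans:
  assumes "covers a b" "covers b c" shows "covers a c"
proof -
  obtain ca Ua Va where a: "a = (ca, Ua, Va)" by (cases a) auto
  obtain cb Ub Vb where b: "b = (cb, Ub, Vb)" by (cases b) auto
  obtain cc Uc Vc where c: "c = (cc, Uc, Vc)" by (cases c) auto
  show ?thesis unfolding a c covers_def prod.case
  proof (intro allI impI)
    fix y assume y: "(\<forall>i. y i \<in> cdom cc) \<and> (\<exists>p\<in>Vc. seq_acc (\<lambda>i. cmap cc (y i)) p)"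
    from assms(2)[unfolded b c covers_def prod.case, rule_format, OF y]
    obtain r where r: "strict_mono r" "\<forall>i. y (r i) \<in> cdom cb"
      "\<exists>p\<in>Vb. seq_acc (\<lambda>i. cmap cb (y (r i))) p" by blast
    from assms(1)[unfolded a b covers_def prod.case, rule_format, of "y \<circ> r"] r
    obtain r' where r': "strict_mono r'" "\<forall>i. y (r (r' i)) \<in> cdom ca"
      "\<exists>p\<in>Va. seq_acc (\<lambda>i. cmap ca (y (r (r' i)))) p" by auto
    show "\<exists>r. strict_mono r \<and> (\<forall>i. y (r i) \<in> cdom ca) \<and> (\<exists>p\<in>Va. seq_acc (\<lambda>i. cmap ca (y (r i))) p)"
      apply (rule exI[of _ "r \<circ> r'"])
      using r r' by (simp add: strict_mono_o)
  qed
qed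

lemma bs_equiv_trans: "bs_equiv a b \<Longrightarrow> bs_equiv b c \<Longrightarrow> bs_equiv a c"
  unfolding bs_equiv_def using covers_trans by blast

lemma bs_equiv_sym: "bs_equiv a b \<Longrightarrow> bs_equiv b a"
  unfolding bs_equiv_def by blast

lemma chart_inj: "is_chart c \<Longrightarrow> inj_on (cmap c) (cdom c)"
proof -
  assume "is_chart c"
  then obtain g where "homeomorphism (cdom c) (cran c) (cmap c) g" unfolding is_chart_def by blast
  then have "\<And>x. x \<in> cdom c \<Longrightarrow> g (cmap c x) = x" unfolding homeomorphism_def by blast
  then show ?thesis by (rule inj_on_inverseI)
qed

lemma rel_bd_closure: "rel_bd U S \<subseteq> closure S"
proof -
  have "rel_bd U S \<subseteq> top_of_set U closure_of S" unfolding rel_bd_def frontier_of_def by blast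
  also have "\<dots> = U \<inter> closure (U \<inter> S)" by (simp add: closure_of_subtopology)
  also have "\<dots> \<subseteq> closure S" using closure_mono[of "U \<inter> S" S] by blast
  finally show ?thesis .
qed

lemma rel_bd_disj:
  assumes "open S" "S \<subseteq> U" shows "rel_bd U S \<inter> S = {}"
proof -
  have "S = S \<inter> U" using assms(2) by blast
  then have "openin (top_of_set U) S" unfolding openin_subtopology using assms(1) by auto
  then have "top_of_set U interior_of S = S" by (rule interior_of_openin)
  then show ?thesis unfolding rel_bd_def frontier_of_def by blast
qed

lemma bd_unique:
  fixes c :: "('a::topological_space, 'n::finite) chart"
  assumes "x \<in> rel_bd U (cran c)" "bs_equiv (c, U, {x}) (c, U, {x'})"
  shows "x = x'"
proof -
  have "x \<in> closure (cran c)" using assms(1) rel_bd_closure by blast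
  then obtain s where s: "\<And>n. s n \<in> cran c" "s \<longlonglongrightarrow> x" unfolding closure_sequential by blast
  define y where "y n = inv_into (cdom c) (cmap c) (s n)" for n
  have y: "\<And>n. y n \<in> cdom c" "\<And>n. cmap c (y n) = s n"
    using s(1) unfolding y_def cran_def by (auto intro: inv_into_into f_inv_into_f)
  have "(\<lambda>i. cmap c (y i)) = s" using y by auto
  then have acc: "seq_acc (\<lambda>i. cmap c (y i)) x" using conv_seq_acc s(2) by simp
  from assms(2) have "covers (c, U, {x'}) (c, U, {x})" unfolding bs_equiv_def by blast
  from this[unfolded covers_def prod.case, rule_format, of y] y(1) acc
  obtain r where r: "strict_mono r" "seq_acc (\<lambda>i. cmap c (y (r i))) x'" by auto
  have "(\<lambda>i. s (r i)) \<longlonglongrightarrow> x" using LIMSEQ_subseq_LIMSEQ[OF s(2) r(1)] by (simp add: o_def)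
  moreover have "seq_acc (\<lambda>i. s (r i)) x'" using r(2) y(2) by simp
  ultimately show ?thesis using conv_seq_acc_unique by blast
qed

lemma equivclp_inv:
  assumes "equivclp r a b"
    and "\<And>u v. r u v \<Longrightarrow> R u v \<and> R v u \<and> D u \<and> D v"
    and "\<And>u v w. R u v \<Longrightarrow> R v w \<Longrightarrow> D v \<Longrightarrow> R u w"
  shows "a = b \<or> R a b"
  using assms(1)
proof (induction rule: equivclp_induct)
  case base then show ?case by simp
next
  case (step y z)
  then have "R y z \<and> D y" using assms(2) by blast
  with step.IH show ?case using assms(3) by blast
qed

lemma subsingleton_closedin:
  fixes K :: "(real^'n) set"
  assumes "K \<subseteq> S" "\<And>a b. a \<in> K \<Longrightarrow> b \<in> K \<Longrightarrow> a = b"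
  shows "closedin (top_of_set S) K"
proof -
  have "finite K"
  proof (cases "K = {}")
    case False
    then obtain y where "y \<in> K" by blast
    then have "K = {y}" using assms(2) by blast
    then show ?thesis by simp
  qed simp
  then have "closed K" by (rule finite_imp_closed)
  then have "closedin (top_of_set S) (S \<inter> K)" by (rule closedin_closed_Int)
  moreover have "S \<inter> K = K" using assms(1) by blast
  ultimately show ?thesis by simp
qed

lemma topspace_quotient_top: "topspace (quotient_top X q) = q ` topspace X"
proof
  show "topspace (quotient_top X q) \<subseteq> q ` topspace X"
    using openin_topspace[of "quotient_top X q"] unfolding openin_quotient_top by blast
  have "{x \<in> topspace X. q x \<in> q ` topspace X} = topspace X" by auto
  then have "openin (quotient_top X q) (q ` topspace X)"
    unfolding openin_quotient_top by simp
  then show "q ` topspace X \<subseteq> topspace (quotient_top X q)" by (rule openin_subset)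
qed

lemma Rtrans_aux:
  assumes "(a \<in> S1 \<and> b \<in> S2 \<and> f1 = f2) \<or> (a \<in> B1 \<and> b \<in> B2 \<and> bs_equiv X Y)"
    "(b \<in> S2 \<and> c \<in> S3 \<and> f2 = f3) \<or> (b \<in> B2 \<and> c \<in> B3 \<and> bs_equiv Y Z)"
    "B2 \<inter> S2 = {}"
  shows "(a \<in> S1 \<and> c \<in> S3 \<and> f1 = f3) \<or> (a \<in> B1 \<and> c \<in> B3 \<and> bs_equiv X Z)"
  using assms
  apply (elim disjE conjE)
  subgoal by simp
  subgoal by blast
  subgoal by blast
  subgoal using bs_equiv_trans by blast
  done

theorem mainTheorem14:
  fixes A :: "('a::{t2_space, second_countable_topology}, 'n::finite) chart set"
    and Q :: "(('a, 'n) chart \<times> (real^'n) set) set"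
  assumes "maximal_smooth_atlas A"
    and "Q \<subseteq> EXT A"
  shows "t1_space (QM A Q)"
proof -
  define N where "N = N_Q A Q"
  define E where "E = S_Q A Q"
  define ts where "ts = topspace N"
  have ts: "ts = Sigma E Ncomp"
    unfolding ts_def N_def N_Q_def E_def by (simp add: o_def)
  have charts: "\<And>c. c \<in> A \<Longrightarrow> is_chart c"
    using assms(1) unfolding maximal_smooth_atlas_def smooth_atlas_def by blast
  have Eprop: "fst e \<in> A \<and> cran (fst e) \<subseteq> snd e" if "e \<in> E" for e
  proof -
    have "e \<in> {(c, cran c) | c. c \<in> A} \<or> e \<in> Q" using that unfolding E_def S_Q_def by blast
    then show ?thesis
    proof
      assume "e \<in> Q" then have "e \<in> EXT A" using assms(2) by blast
      then show ?thesis unfolding EXT_def by auto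
    qed auto
  qed
  have disj: "rel_bd (snd e) (cran (fst e)) \<inter> cran (fst e) = {}" if "e \<in> E" for e
    using Eprop[OF that] charts rel_bd_disj is_chart_def by metis
  define r where "r = (\<lambda>u v. u \<in> ts \<and> v \<in> ts \<and> ident u v)"
  define R where "R = (\<lambda>(a::(('a, 'n) chart \<times> (real^'n) set) \<times> (real^'n)) b.
     (snd a \<in> cran (fst (fst a)) \<and> snd b \<in> cran (fst (fst b)) \<and>
       inv_into (cdom (fst (fst a))) (cmap (fst (fst a))) (snd a) =
       inv_into (cdom (fst (fst b))) (cmap (fst (fst b))) (snd b)) \<or>
     (snd a \<in> rel_bd (snd (fst a)) (cran (fst (fst a))) \<and> snd b \<in> rel_bd (snd (fst b)) (cran (fst (fst b))) \<and>
       bs_equiv (fst (fst a), snd (fst a), {snd a}) (fst (fst b), snd (fst b), {snd b})))"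
  have qmap_eq: "qmap A Q a = {b \<in> ts. equivclp r a b}" for a
    unfolding qmap_def r_def ts_def N_def by simp
  have rR: "R u v \<and> R v u \<and> u \<in> ts \<and> v \<in> ts" if "r u v" for u v
  proof -
    obtain c U x where u: "u = ((c, U), x)" by (metis prod.collapse)
    obtain d X y where v: "v = ((d, X), y)" by (metis prod.collapse)
    have uts: "u \<in> ts" and vts: "v \<in> ts" and id: "ident u v" using that unfolding r_def by auto
    have "(c, U) \<in> E" "(d, X) \<in> E" using uts vts unfolding ts u v by auto
    then have cd: "is_chart c" "is_chart d" using Eprop charts by (metis fst_conv)+
    have "R ((c, U), x) ((d, X), y)"
      using id unfolding ident_def u v prod.case
    proof
      assume H: "x \<in> cran c \<and> y \<in> cran d \<and> inv_into (cdom c) (cmap c) x \<in> cdom d \<and>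
        cmap d (inv_into (cdom c) (cmap c) x) = y"
      then have "inv_into (cdom d) (cmap d) y = inv_into (cdom c) (cmap c) x"
        using inv_into_f_f[OF chart_inj[OF cd(2)]] by blast
      then show "R ((c, U), x) ((d, X), y)" using H unfolding R_def by simp
    next
      assume "x \<in> rel_bd U (cran c) \<and> y \<in> rel_bd X (cran d) \<and> bs_equiv (c, U, {x}) (d, X, {y})"
      then show "R ((c, U), x) ((d, X), y)" unfolding R_def by simp
    qed
    then have "R u v" unfolding u v .
    then have "R v u" unfolding R_def using bs_equiv_sym by metis
    with \<open>R u v\<close> uts vts show ?thesis by blast
  qed
  have Rtrans: "R u w" if "R u v" "R v w" "v \<in> ts" for u v w
  proof -
    have "fst v \<in> E" using that(3) unfolding ts by auto
    then have D: "rel_bd (snd (fst v)) (cran (fst (fst v))) \<inter> cran (fst (fst v)) = {}" by (rule disj)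
    show ?thesis unfolding R_def by (rule Rtrans_aux[OF that(1,2)[unfolded R_def] D])
  qed
  have key: "x = x'" if xts: "x \<in> ts" and fx: "fst x = fst x'" and eq: "equivclp r x x'" for x x'
  proof -
    have "x = x' \<or> R x x'" using equivclp_inv[OF eq, of R "\<lambda>u. u \<in> ts"] rR Rtrans by blast
    moreover have "R x x' \<Longrightarrow> x = x'"
    proof -
      assume H: "R x x'"
      obtain e p where x: "x = (e, p)" by (metis prod.collapse)
      obtain p' where x': "x' = (e, p')" using fx x by (metis prod.collapse fst_conv)
      have "e \<in> E" using xts unfolding ts x by auto
      then have c: "is_chart (fst e)" using Eprop charts by auto
      from H show ?thesis unfolding R_def x x' prod.case fst_conv snd_conv
      proof
        assume "p \<in> cran (fst e) \<and> p' \<in> cran (fst e) \<and>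
          inv_into (cdom (fst e)) (cmap (fst e)) p = inv_into (cdom (fst e)) (cmap (fst e)) p'"
        then show "(e, p) = (e, p')" unfolding cran_def by (metis f_inv_into_f)
      next
        assume "p \<in> rel_bd (snd e) (cran (fst e)) \<and> p' \<in> rel_bd (snd e) (cran (fst e)) \<and>
          bs_equiv (fst e, snd e, {p}) (fst e, snd e, {p'})"
        then show "(e, p) = (e, p')" using bd_unique by blast
      qed
    qed
    ultimately show ?thesis by blast
  qed
  have closedC: "closedin N {x \<in> ts. qmap A Q x = qmap A Q z}" for z
  proof -
    define C where "C = {x \<in> ts. qmap A Q x = qmap A Q z}"
    have rel: "equivclp r x x'" if "x \<in> C" "x' \<in> C" for x x'
    proof -
      have "x' \<in> ts" using that(2) unfolding C_def by simp
      then have "x' \<in> qmap A Q x'" unfolding qmap_eq by simp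
      then have "x' \<in> qmap A Q x" using that unfolding C_def by simp
      then show ?thesis unfolding qmap_eq by simp
    qed
    have "closedin N C"
      unfolding N_def N_Q_def closedin_sum_topology
    proof (intro conjI ballI)
      show "C \<subseteq> Sigma (S_Q A Q) (topspace \<circ> (\<lambda>e. top_of_set (Ncomp e)))"
        using ts unfolding C_def E_def by (auto simp: o_def)
      fix e assume "e \<in> S_Q A Q"
      show "closedin (top_of_set (Ncomp e)) {x. (e, x) \<in> C}"
      proof (rule subsingleton_closedin)
        show "{x. (e, x) \<in> C} \<subseteq> Ncomp e" using ts unfolding C_def by auto
        fix a b assume "a \<in> {x. (e, x) \<in> C}" "b \<in> {x. (e, x) \<in> C}"
        then have "(e, a) \<in> C" "(e, b) \<in> C" by auto
        moreover from this have "(e, a) \<in> ts" unfolding C_def by auto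
        ultimately have "(e, a) = (e, b)" using key[of "(e, a)" "(e, b)"] rel[of "(e, a)" "(e, b)"] by simp
        then show "a = b" by simp
      qed
    qed
    then show ?thesis unfolding C_def .
  qed
  have tQ: "topspace (QM A Q) = qmap A Q ` ts"
    unfolding QM_def topspace_quotient_top ts_def N_def ..
  show ?thesis unfolding t1_space_def
  proof (intro ballI impI)
    fix p q assume p: "p \<in> topspace (QM A Q)" and q: "q \<in> topspace (QM A Q)" and pq: "p \<noteq> q"
    obtain z where z: "z \<in> ts" "q = qmap A Q z" using q tQ by auto
    define U where "U = qmap A Q ` ts - {q}"
    have pre: "{x \<in> topspace N. qmap A Q x \<in> U} = topspace N - {x \<in> ts. qmap A Q x = qmap A Q z}"
      unfolding U_def z(2) ts_def by auto
    have "openin N (topspace N - {x \<in> ts. qmap A Q x = qmap A Q z})"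
      using closedC[of z] unfolding closedin_def by blast
    then have "openin (QM A Q) U"
      unfolding QM_def openin_quotient_top pre[unfolded N_def] N_def
      by (simp add: U_def ts_def N_def)
    moreover have "p \<in> U" "q \<notin> U" using p pq tQ unfolding U_def by auto
    ultimately show "\<exists>U. openin (QM A Q) U \<and> p \<in> U \<and> q \<notin> U" by blast
  qed
qed

end
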